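(* In Algorithm 1 (described in the context), for every triplet $(\mathrm{dist},\mathrm{seed},v_0)$ popped from the priority queue $Q$ there is a path from $\mathrm{seed}$ to $v_0$ in $G$ of length $\mathrm{dist}$.
   Context: Algorithm 1 (geodesic $k$ nearest labeled neighbours). Input: an undirected graph $G=(V,E,w)$ with non-negative weights, a set $\mathcal L\subseteq V$ of labeled vertices, and an integer $k\ge1$. It maintains a min-priority queue $Q$ of pairs $(\mathrm{seed},v)\in\mathcal L\times V$ with priorities (a popped pair with priority $\mathrm{dist}$ is called the triplet $(\mathrm{dist},\mathrm{seed},v)$), and for each $v\in V$ a list kNN$[v]$ (initially empty) and a set $S_v$ (initially empty). Initially, for each $s\in\mathcal L$, $(s,s)$ is inserted with priority $0$. While $Q$ is nonempty: pop the pair $(\mathrm{seed},v_0)$ of minimum priority $\mathrm{dist}$; add $\mathrm{seed}$ to $S_{v_0}$; if kNN$[v_0]$ has fewer than $k$ entries, append $(\mathrm{dist},\mathrm{seed})$ to kNN$[v_0]$ and, for every neighbour $v$ of $v_0$ such that kNN$[v]$ has fewer than $k$ entries and $\mathrm{seed}\notin S_v$, perform decrease-or-insert of $(\mathrm{seed},v)$ with priority $\mathrm{dist}+w(v_0,v)$ (if the pair is in $Q$ its priority is lowered to this value when smaller; otherwise it is inserted). *)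

theory Defs
  imports Complex_Main
begin

record 'v knn_state =
  Qu   :: "('v \<times> 'v) \<Rightarrow> real option"   (* priority queue: pair (seed, v) -> priority *)
  kNN  :: "'v \<Rightarrow> (real \<times> 'v) list"
  Sset :: "'v \<Rightarrow> 'v set"

definition knn_init :: "'v set \<Rightarrow> 'v knn_state" where
  "knn_init L = \<lparr> Qu = (\<lambda>(s, v). if s \<in> L \<and> v = s then Some 0 else None),
                   kNN = (\<lambda>_. []), Sset = (\<lambda>_. {}) \<rparr>"

text \<open>The neighbour loop is order-independent (its guards only inspect kNN[v], S_v for
  neighbours v and the updated entries for v0), so it is performed simultaneously.\<close>
definition knn_step ::
  "('v \<times> 'v) set \<Rightarrow> ('v \<Rightarrow> 'v \<Rightarrow> real) \<Rightarrow> nat \<Rightarrow> 'v knn_state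
     \<Rightarrow> real \<times> 'v \<times> 'v \<Rightarrow> 'v knn_state \<Rightarrow> bool" where
  "knn_step E w k st t st' \<longleftrightarrow>
     (case t of (d, seed, v0) \<Rightarrow>
       Qu st (seed, v0) = Some d \<and>
       (\<forall>p d'. Qu st p = Some d' \<longrightarrow> d \<le> d') \<and>
       (let S' = (Sset st)(v0 := insert seed (Sset st v0)) in
        if length (kNN st v0) < k then
          (let K' = (kNN st)(v0 := kNN st v0 @ [(d, seed)]) in
           st' = \<lparr> Qu = (\<lambda>(s, v).
                      if (s, v) = (seed, v0) then None
                      else if s = seed \<and> (v0, v) \<in> E \<and> length (K' v) < k \<and> seed \<notin> S' v then
                        (case Qu st (s, v) of
                           None \<Rightarrow> Some (d + w v0 v)
                         | Some p \<Rightarrow> Some (min p (d + w v0 v)))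
                      else Qu st (s, v)),
                   kNN = K', Sset = S' \<rparr>)
        else
          st' = \<lparr> Qu = (Qu st)((seed, v0) := None), kNN = kNN st, Sset = S' \<rparr>))"

inductive knn_reachable ::
  "('v \<times> 'v) set \<Rightarrow> ('v \<Rightarrow> 'v \<Rightarrow> real) \<Rightarrow> 'v set \<Rightarrow> nat \<Rightarrow> 'v knn_state \<Rightarrow> bool"
  for E w L k where
  init: "knn_reachable E w L k (knn_init L)"
| step: "knn_reachable E w L k st \<Longrightarrow> knn_step E w k st t st' \<Longrightarrow> knn_reachable E w L k st'"

definition is_path :: "('v \<times> 'v) set \<Rightarrow> 'v \<Rightarrow> 'v \<Rightarrow> 'v list \<Rightarrow> bool" where
  "is_path E s t p \<longleftrightarrow> p \<noteq> [] \<and> hd p = s \<and> last p = t \<and> distinct p \<and>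
     (\<forall>i. Suc i < length p \<longrightarrow> (p ! i, p ! Suc i) \<in> E)"

definition path_length :: "('v \<Rightarrow> 'v \<Rightarrow> real) \<Rightarrow> 'v list \<Rightarrow> real" where
  "path_length w p = sum_list (map (\<lambda>(a, b). w a b) (zip p (tl p)))"

end

theory Submission
  imports Defs
begin

definition inv_q :: "('v \<times> 'v) set \<Rightarrow> ('v \<Rightarrow> 'v \<Rightarrow> real) \<Rightarrow> 'v knn_state \<Rightarrow> bool" where
  "inv_q E w st \<longleftrightarrow> (\<forall>s v d. Qu st (s, v) = Some d \<longrightarrow>
     (\<exists>p. is_path E s v p \<and> path_length w p = d \<and> (\<forall>x\<in>set (butlast p). s \<in> Sset st x)))"

lemma path_length_snoc:
  "p \<noteq> [] \<Longrightarrow> path_length w (p @ [v]) = path_length w p + w (last p) v"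
proof (induction p)
  case Nil then show ?case by simp
next
  case (Cons a q)
  show ?case
  proof (cases q)
    case Nil then show ?thesis by (simp add: path_length_def)
  next
    case (Cons b r)
    with Cons.IH show ?thesis by (simp add: path_length_def)
  qed
qed

lemma is_path_snoc:
  assumes "is_path E s u p" "(u, v) \<in> E" "v \<notin> set p"
  shows "is_path E s v (p @ [v])"
  unfolding is_path_def
proof (intro conjI allI impI)
  show "p @ [v] \<noteq> []" by simp
  show "hd (p @ [v]) = s" using assms(1) by (simp add: is_path_def)
  show "last (p @ [v]) = v" by simp
  show "distinct (p @ [v])" using assms(1,3) by (simp add: is_path_def)
  fix i assume i: "Suc i < length (p @ [v])"
  show "((p @ [v]) ! i, (p @ [v]) ! Suc i) \<in> E"
  proof (cases "Suc i < length p")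
    case True then show ?thesis using assms(1) by (simp add: is_path_def nth_append)
  next
    case False
    then have "i = length p - 1" "p \<noteq> []" using i assms(1) by (auto simp: is_path_def)
    then have "p ! i = u" using assms(1) by (simp add: is_path_def last_conv_nth)
    moreover have "(p @ [v]) ! Suc i = v" using \<open>i = length p - 1\<close> \<open>p \<noteq> []\<close> by (simp add: nth_append)
    moreover have "i < length p" using \<open>i = length p - 1\<close> \<open>p \<noteq> []\<close> by simp
    ultimately show ?thesis using assms(2) by (simp add: nth_append)
  qed
qed

lemma inv_init: "inv_q E w (knn_init L)"
  unfolding inv_q_def knn_init_def
  by (auto split: if_splits intro!: exI[of _ "[_]"] simp: is_path_def path_length_def)

lemma inv_step:
  assumes inv: "inv_q E w st" and st: "knn_step E w k st (d, seed, v0) st'"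
  shows "inv_q E w st'"
proof -
  have pop: "Qu st (seed, v0) = Some d" using st by (simp add: knn_step_def)
  obtain p0 where p0: "is_path E seed v0 p0" "path_length w p0 = d"
    "\<forall>x\<in>set (butlast p0). seed \<in> Sset st x"
    using inv pop unfolding inv_q_def by blast
  define S' where "S' = (Sset st)(v0 := insert seed (Sset st v0))"
  have mono: "\<And>x. Sset st x \<subseteq> S' x" by (auto simp: S'_def)
  have p0S: "\<forall>x\<in>set p0. seed \<in> S' x"
  proof
    fix x assume "x \<in> set p0"
    have "p0 \<noteq> []" "last p0 = v0" using p0(1) by (auto simp: is_path_def)
    then have "p0 = butlast p0 @ [v0]" by (metis append_butlast_last_id)
    then have "x \<in> set (butlast p0) \<or> x = v0" using \<open>x \<in> set p0\<close>
      by (metis Un_iff empty_iff empty_set list.simps(15) set_append singletonD)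
    then show "seed \<in> S' x" using p0(3) mono by (auto simp: S'_def)
  qed
  have old: "\<And>s v d'. Qu st (s, v) = Some d' \<Longrightarrow> (\<exists>p. is_path E s v p \<and> path_length w p = d' \<and> (\<forall>x\<in>set (butlast p). s \<in> S' x))"
    using inv mono unfolding inv_q_def by blast
  have new: "\<And>v. (v0, v) \<in> E \<Longrightarrow> seed \<notin> S' v \<Longrightarrow> (\<exists>p. is_path E seed v p \<and> path_length w p = d + w v0 v \<and> (\<forall>x\<in>set (butlast p). seed \<in> S' x))"
  proof -
    fix v assume e: "(v0, v) \<in> E" and ns: "seed \<notin> S' v"
    have "v \<notin> set p0" using ns p0S by blast
    moreover have "p0 \<noteq> []" "last p0 = v0" using p0(1) by (auto simp: is_path_def)
    ultimately show "?thesis v"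
      using is_path_snoc[OF p0(1) e] path_length_snoc[of p0 w v] p0(2) p0S
      by (intro exI[of _ "p0 @ [v]"]) auto
  qed
  show ?thesis
  proof (cases "length (kNN st v0) < k")
    case True
    define K' where "K' = (kNN st)(v0 := kNN st v0 @ [(d, seed)])"
    have st': "st' = \<lparr> Qu = (\<lambda>(s, v).
                      if (s, v) = (seed, v0) then None
                      else if s = seed \<and> (v0, v) \<in> E \<and> length (K' v) < k \<and> seed \<notin> S' v then
                        (case Qu st (s, v) of
                           None \<Rightarrow> Some (d + w v0 v)
                         | Some p \<Rightarrow> Some (min p (d + w v0 v)))
                      else Qu st (s, v)),
                   kNN = K', Sset = S' \<rparr>"
      using st True unfolding knn_step_def S'_def K'_def by (simp add: Let_def)
    show ?thesis unfolding inv_q_def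
    proof (intro allI impI)
      fix s v d' assume q: "Qu st' (s, v) = Some d'"
      show "\<exists>p. is_path E s v p \<and> path_length w p = d' \<and> (\<forall>x\<in>set (butlast p). s \<in> Sset st' x)"
      proof (cases "(s, v) \<noteq> (seed, v0) \<and> s = seed \<and> (v0, v) \<in> E \<and> length (K' v) < k \<and> seed \<notin> S' v")
        case c: True
        show ?thesis
        proof (cases "Qu st (s, v)")
          case None
          then show ?thesis using q c st' new by auto
        next
          case (Some pp)
          then have "d' = min pp (d + w v0 v)" using q c st' by auto
          then show ?thesis using Some c st' new old by (cases "pp \<le> d + w v0 v") auto
        qed
      next
        case False
        then have "Qu st (s, v) = Some d'" using q st' by (auto split: if_splits)
        then show ?thesis using old st' by auto
      qed
    qed
  next
    case False
    then have st': "st' = \<lparr> Qu = (Qu st)((seed, v0) := None), kNN = kNN st, Sset = S' \<rparr>"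
      using st unfolding knn_step_def S'_def by (simp add: Let_def)
    show ?thesis unfolding inv_q_def
    proof (intro allI impI)
      fix s v d' assume q: "Qu st' (s, v) = Some d'"
      then have "Qu st (s, v) = Some d'" using st' by (auto split: if_splits)
      then show "\<exists>p. is_path E s v p \<and> path_length w p = d' \<and> (\<forall>x\<in>set (butlast p). s \<in> Sset st' x)"
        using old st' by auto
    qed
  qed
qed

lemma inv_reach: "knn_reachable E w L k st \<Longrightarrow> inv_q E w st"
  by (induction rule: knn_reachable.induct) (auto intro: inv_init inv_step)

theorem lemmaB2:
  fixes V L :: "'v set" and E :: "('v \<times> 'v) set" and w :: "'v \<Rightarrow> 'v \<Rightarrow> real" and k :: nat
  assumes "E \<subseteq> V \<times> V" and "sym E"
    and "\<forall>u v. (u, v) \<in> E \<longrightarrow> 0 \<le> w u v \<and> w u v = w v u"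
    and "L \<subseteq> V" and "1 \<le> k"
    and "knn_reachable E w L k st"
    and "knn_step E w k st (d, seed, v0) st'"
  shows "\<exists>p. is_path E seed v0 p \<and> path_length w p = d"
proof -
  have "inv_q E w st" using inv_reach assms(6) by blast
  moreover have "Qu st (seed, v0) = Some d" using assms(7) by (simp add: knn_step_def)
  ultimately show ?thesis unfolding inv_q_def by blast
qed

end
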